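(* Let $((i_0,j_0),\dots,(i_{q-1},j_{q-1}))$ be a sequence of pairs in $[n]^2$ with $i_\ell<j_\ell$ defining a sorting network, and let $Q_n\subset\mathbb{R}^{n(q+1)}$ and $\tilde Q_n\subset\mathbb{R}^{n+2q}$ be as defined below. Then $Q_n$ and $\tilde Q_n$ are affinely equivalent: there exist affine maps $\tilde\pi:\mathbb{R}^{n(q+1)}\to\mathbb{R}^{n+2q}$ and $\overline{\pi}:\mathbb{R}^{n+2q}\to\mathbb{R}^{n(q+1)}$ such that $\overline{\pi}(\tilde Q_n)=Q_n$ and $\tilde\pi(Q_n)=\tilde Q_n$.
   Context: The sequence defines a sorting network if applying successively, for $\ell=0,\dots,q-1$, the map exchanging coordinates $x_{i_\ell},x_{j_\ell}$ whenever $x_{i_\ell}>x_{j_\ell}$, sends every $(\sigma(1),\dots,\sigma(n))$, $\sigma\in\mathcal{S}_n$, to $x_{id}=(1,2,\dots,n)$. Define $Q_n$ as the set of $(y_0,\dots,y_q)\in(\mathbb{R}^n)^{q+1}$ with $y_q=x_{id}$ and, for each $k=0,\dots,q-1$: $(y_{k+1})_l=(y_k)_l$ for all $l\notin\{i_k,j_k\}$; $(y_{k+1})_{i_k}+(y_{k+1})_{j_k}=(y_k)_{i_k}+(y_k)_{j_k}$; and $(y_{k+1})_{j_k}-(y_{k+1})_{i_k}\ge |(y_k)_{j_k}-(y_k)_{i_k}|$. For $\tilde w=(y_0,a_1,b_1,\dots,a_q,b_q)\in\mathbb{R}^n\times\mathbb{R}^{2q}$ define linear maps $z_0(\tilde w)=y_0$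 and, for $1\le m\le q$, $z_m(\tilde w)\in\mathbb{R}^n$ obtained from $z_{m-1}(\tilde w)$ by replacing its $i_{m-1}$-th coordinate by $a_m$ and its $j_{m-1}$-th coordinate by $b_m$; let $\alpha_m(\tilde w)$ and $\beta_m(\tilde w)$ be the $i_{m-1}$-th and $j_{m-1}$-th coordinates of $z_{m-1}(\tilde w)$. Then $\tilde Q_n=\{\tilde w\in\mathbb{R}^{n+2q}: z_q(\tilde w)=x_{id},\ a_m+b_m=\alpha_m(\tilde w)+\beta_m(\tilde w),\ b_m\ge\max\{\alpha_m(\tilde w),\beta_m(\tilde w)\}\ \forall 1\le m\le q\}$. *)

theory Defs
  imports Complex_Main "HOL-Combinatorics.Permutations"
begin

text \<open>Conventions: indices are 0-based, so [n] is rendered as {0..<n} and the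
comparator sequence is given by functions i j :: nat => nat on {0..<q}.
A point of R^N is represented as a function nat => real vanishing at
all coordinates >= N.\<close>

definition vecs :: "nat \<Rightarrow> (nat \<Rightarrow> real) set" where
  "vecs N = {x. \<forall>k\<ge>N. x k = 0}"

definition affine_map :: "nat \<Rightarrow> nat \<Rightarrow> ((nat \<Rightarrow> real) \<Rightarrow> (nat \<Rightarrow> real)) \<Rightarrow> bool" where
  "affine_map N M f \<longleftrightarrow>
     (\<exists>(A :: nat \<Rightarrow> nat \<Rightarrow> real) (c :: nat \<Rightarrow> real). \<forall>x\<in>vecs N.
        f x = (\<lambda>k. if k < M then c k + (\<Sum>l<N. A k l * x l) else 0))"

definition xid :: "nat \<Rightarrow> real" where
  "xid l = real (l + 1)"

definition cmpx :: "nat \<Rightarrow> nat \<Rightarrow> (nat \<Rightarrow> real) \<Rightarrow> (nat \<Rightarrow> real)" where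
  "cmpx a b x = (if x a > x b then x(a := x b, b := x a) else x)"

fun apply_net :: "(nat \<Rightarrow> nat) \<Rightarrow> (nat \<Rightarrow> nat) \<Rightarrow> nat \<Rightarrow> (nat \<Rightarrow> real) \<Rightarrow> (nat \<Rightarrow> real)" where
  "apply_net i j 0 x = x"
| "apply_net i j (Suc m) x = cmpx (i m) (j m) (apply_net i j m x)"

definition sorting_network :: "nat \<Rightarrow> nat \<Rightarrow> (nat \<Rightarrow> nat) \<Rightarrow> (nat \<Rightarrow> nat) \<Rightarrow> bool" where
  "sorting_network n q i j \<longleftrightarrow>
     (\<forall>\<sigma>. \<sigma> permutes {0..<n} \<longrightarrow>
        (\<forall>l<n. apply_net i j q (\<lambda>t. real (\<sigma> t + 1)) l = xid l))"

text \<open>Q_n, flattened: y_k has l-th coordinate at index k*n + l, k = 0..q.\<close>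
definition Qn :: "nat \<Rightarrow> nat \<Rightarrow> (nat \<Rightarrow> nat) \<Rightarrow> (nat \<Rightarrow> nat) \<Rightarrow> (nat \<Rightarrow> real) set" where
  "Qn n q i j = {x \<in> vecs (n * (q + 1)).
     let y = (\<lambda>k l. x (k * n + l)) in
       (\<forall>l<n. y q l = xid l) \<and>
       (\<forall>k<q.
          (\<forall>l<n. l \<noteq> i k \<and> l \<noteq> j k \<longrightarrow> y (Suc k) l = y k l) \<and>
          y (Suc k) (i k) + y (Suc k) (j k) = y k (i k) + y k (j k) \<and>
          y (Suc k) (j k) - y (Suc k) (i k) \<ge> \<bar>y k (j k) - y k (i k)\<bar>)}"

text \<open>Coordinates of w = (y_0, a_1, b_1, ..., a_q, b_q) in R^(n+2q):
  (y_0)_l = w l for l < n, a_m = w (n + 2(m-1)), b_m = w (n + 2(m-1) + 1).\<close>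
definition tl_a :: "nat \<Rightarrow> (nat \<Rightarrow> real) \<Rightarrow> nat \<Rightarrow> real" where
  "tl_a n w m = w (n + 2 * (m - 1))"

definition tl_b :: "nat \<Rightarrow> (nat \<Rightarrow> real) \<Rightarrow> nat \<Rightarrow> real" where
  "tl_b n w m = w (n + 2 * (m - 1) + 1)"

fun tl_z :: "nat \<Rightarrow> (nat \<Rightarrow> nat) \<Rightarrow> (nat \<Rightarrow> nat) \<Rightarrow> (nat \<Rightarrow> real) \<Rightarrow> nat \<Rightarrow> (nat \<Rightarrow> real)" where
  "tl_z n i j w 0 = (\<lambda>l. if l < n then w l else 0)"
| "tl_z n i j w (Suc m) = (tl_z n i j w m)(i m := tl_a n w (Suc m), j m := tl_b n w (Suc m))"

definition tl_alpha :: "nat \<Rightarrow> (nat \<Rightarrow> nat) \<Rightarrow> (nat \<Rightarrow> nat) \<Rightarrow> (nat \<Rightarrow> real) \<Rightarrow> nat \<Rightarrow> real" where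
  "tl_alpha n i j w m = tl_z n i j w (m - 1) (i (m - 1))"

definition tl_beta :: "nat \<Rightarrow> (nat \<Rightarrow> nat) \<Rightarrow> (nat \<Rightarrow> nat) \<Rightarrow> (nat \<Rightarrow> real) \<Rightarrow> nat \<Rightarrow> real" where
  "tl_beta n i j w m = tl_z n i j w (m - 1) (j (m - 1))"

definition Qtn :: "nat \<Rightarrow> nat \<Rightarrow> (nat \<Rightarrow> nat) \<Rightarrow> (nat \<Rightarrow> nat) \<Rightarrow> (nat \<Rightarrow> real) set" where
  "Qtn n q i j = {w \<in> vecs (n + 2 * q).
     (\<forall>l<n. tl_z n i j w q l = xid l) \<and>
     (\<forall>m\<in>{1..q}.
        tl_a n w m + tl_b n w m = tl_alpha n i j w m + tl_beta n i j w m \<and>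
        tl_b n w m \<ge> max (tl_alpha n i j w m) (tl_beta n i j w m))}"

end

theory Submission
  imports Defs
begin

definition pit :: "nat \<Rightarrow> nat \<Rightarrow> (nat \<Rightarrow> nat) \<Rightarrow> (nat \<Rightarrow> nat) \<Rightarrow> (nat \<Rightarrow> real) \<Rightarrow> (nat \<Rightarrow> real)" where
  "pit n q i j x = (\<lambda>k. if k < n then x k else if k < n + 2*q then
     (if even (k-n) then x (((k-n) div 2 + 1)*n + i ((k-n) div 2))
      else x (((k-n) div 2 + 1)*n + j ((k-n) div 2))) else 0)"

definition pib :: "nat \<Rightarrow> nat \<Rightarrow> (nat \<Rightarrow> nat) \<Rightarrow> (nat \<Rightarrow> nat) \<Rightarrow> (nat \<Rightarrow> real) \<Rightarrow> (nat \<Rightarrow> real)" where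
  "pib n q i j w = (\<lambda>k. if k < n*(q+1) then tl_z n i j w (k div n) (k mod n) else 0)"

definition aff :: "nat \<Rightarrow> ((nat \<Rightarrow> real) \<Rightarrow> real) \<Rightarrow> bool" where
  "aff N g \<longleftrightarrow> (\<exists>c (A :: nat \<Rightarrow> real). \<forall>x\<in>vecs N. g x = c + (\<Sum>l<N. A l * x l))"

lemma aff_const: "aff N (\<lambda>x. c)"
  unfolding aff_def by (rule exI[of _ c], rule exI[of _ "\<lambda>_. 0"]) simp

lemma aff_proj: assumes "t < N" shows "aff N (\<lambda>x. x t)"
  unfolding aff_def
proof (rule exI[of _ 0], rule exI[of _ "\<lambda>l. if l = t then 1 else 0"], intro ballI)
  fix x :: "nat \<Rightarrow> real"
  have "(\<Sum>l<N. (if l = t then 1 else 0) * x l) = (\<Sum>l<N. if l = t then x l else 0)"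
    by (rule sum.cong) auto
  also have "\<dots> = x t" using assms by (simp add: sum.delta)
  finally show "x t = 0 + (\<Sum>l<N. (if l = t then 1 else 0) * x l)" by simp
qed

lemma aff_if: "aff N f \<Longrightarrow> aff N g \<Longrightarrow> aff N (\<lambda>x. if P then f x else g x)"
  by (cases P) auto

lemma affine_map_intro:
  assumes "\<And>x k. x \<in> vecs N \<Longrightarrow> f x k = (if k < M then g k x else 0)"
    and "\<And>k. k < M \<Longrightarrow> aff N (g k)"
  shows "affine_map N M f"
proof -
  have "\<forall>k. \<exists>c A. k < M \<longrightarrow> (\<forall>x\<in>vecs N. g k x = c + (\<Sum>l<N. A l * x l))"
    using assms(2) unfolding aff_def by blast
  then obtain c A where cA: "\<And>k. k < M \<Longrightarrow> (\<forall>x\<in>vecs N. g k x = c k + (\<Sum>l<N. A k l * x l))"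
    by metis
  show ?thesis unfolding affine_map_def
    by (rule exI[of _ A], rule exI[of _ c]) (auto simp: assms(1) cA)
qed

lemma aff_z:
  assumes "m \<le> q" and ij: "\<forall>l<q. i l < j l \<and> j l < n"
  shows "aff (n + 2*q) (\<lambda>w. tl_z n i j w m l)"
  using assms(1)
proof (induction m arbitrary: l)
  case 0
  show ?case
  proof (cases "l < n")
    case True then show ?thesis by (simp add: aff_proj)
  next
    case False then show ?thesis by (simp add: aff_const)
  qed
next
  case (Suc m)
  have "aff (n + 2*q) (\<lambda>w. if l = j m then tl_b n w (Suc m) else if l = i m then tl_a n w (Suc m)
      else tl_z n i j w m l)"
    using Suc by (auto intro!: aff_if aff_proj simp: tl_a_def tl_b_def)
  then show ?case by (simp add: fun_upd_def)
qed

lemma pit_a: "k < q \<Longrightarrow> tl_a n (pit n q i j x) (Suc k) = x ((Suc k)*n + i k)"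
  by (simp add: tl_a_def pit_def)

lemma pit_b: "k < q \<Longrightarrow> tl_b n (pit n q i j x) (Suc k) = x ((Suc k)*n + j k)"
  by (simp add: tl_b_def pit_def)

lemma z_pit:
  assumes ij: "\<forall>l<q. i l < j l \<and> j l < n"
    and step: "\<forall>k<q. \<forall>l<n. l \<noteq> i k \<and> l \<noteq> j k \<longrightarrow> x (Suc k * n + l) = x (k * n + l)"
    and "k \<le> q" and "l < n"
  shows "tl_z n i j (pit n q i j x) k l = x (k * n + l)"
  using assms(3,4)
proof (induction k arbitrary: l)
  case 0
  then show ?case by (simp add: pit_def)
next
  case (Suc k)
  have kq: "k < q" using Suc by simp
  show ?case
  proof (cases "l = j k")
    case True then show ?thesis using kq by (simp add: pit_b)
  next
    case False
    show ?thesis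
    proof (cases "l = i k")
      case True then show ?thesis using kq False by (simp add: pit_a)
    next
      case False2: False
      then show ?thesis using Suc step kq False by simp
    qed
  qed
qed

lemma pib_val: "k \<le> q \<Longrightarrow> l < n \<Longrightarrow> pib n q i j w (k * n + l) = tl_z n i j w k l"
proof -
  assume a: "k \<le> q" "l < n"
  have "k * n + l < n * (q + 1)"
  proof -
    have "k * n + l < k * n + n" using a by simp
    also have "\<dots> = (k+1)*n" by simp
    also have "\<dots> \<le> (q+1)*n" using a by (intro mult_right_mono) auto
    finally show ?thesis by (simp add: mult.commute)
  qed
  moreover have "(k * n + l) div n = k" "(k * n + l) mod n = l" using a by auto
  ultimately show ?thesis by (simp add: pib_def)
qed

lemma abs_iff: "(a::real) + b = al + be \<Longrightarrow> (b - a \<ge> \<bar>be - al\<bar> \<longleftrightarrow> b \<ge> max al be)"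
  by (auto simp: abs_if max_def)

lemma part1:
  assumes ij: "\<forall>l<q. i l < j l \<and> j l < n" and x: "x \<in> Qn n q i j"
  shows "pit n q i j x \<in> Qtn n q i j \<and> pib n q i j (pit n q i j x) = x"
proof -
  have xv: "x \<in> vecs (n * (q + 1))" and xq: "\<forall>l<n. x (q*n+l) = xid l"
    and st: "\<forall>k<q. (\<forall>l<n. l \<noteq> i k \<and> l \<noteq> j k \<longrightarrow> x (Suc k * n + l) = x (k * n + l)) \<and>
          x (Suc k * n + i k) + x (Suc k * n + j k) = x (k * n + i k) + x (k * n + j k) \<and>
          x (Suc k * n + j k) - x (Suc k * n + i k) \<ge> \<bar>x (k * n + j k) - x (k * n + i k)\<bar>"
    using x unfolding Qn_def Let_def by auto
  have step: "\<forall>k<q. \<forall>l<n. l \<noteq> i k \<and> l \<noteq> j k \<longrightarrow> x (Suc k * n + l) = x (k * n + l)"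
    using st by blast
  note zp = z_pit[OF ij step]
  let ?w = "pit n q i j x"
  have "?w \<in> vecs (n + 2*q)" by (simp add: vecs_def pit_def)
  moreover have "\<forall>l<n. tl_z n i j ?w q l = xid l" using zp xq by simp
  moreover have "\<forall>m\<in>{1..q}.
        tl_a n ?w m + tl_b n ?w m = tl_alpha n i j ?w m + tl_beta n i j ?w m \<and>
        tl_b n ?w m \<ge> max (tl_alpha n i j ?w m) (tl_beta n i j ?w m)"
  proof
    fix m assume "m \<in> {1..q}"
    then obtain k where m: "m = Suc k" and kq: "k < q" by (cases m) auto
    have e: "tl_a n ?w m = x (Suc k * n + i k)" "tl_b n ?w m = x (Suc k * n + j k)"
      "tl_alpha n i j ?w m = x (k * n + i k)" "tl_beta n i j ?w m = x (k * n + j k)"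
      using kq ij zp[of k "i k"] zp[of k "j k"] by (auto simp: m pit_a pit_b tl_alpha_def tl_beta_def)
    show "tl_a n ?w m + tl_b n ?w m = tl_alpha n i j ?w m + tl_beta n i j ?w m \<and>
        tl_b n ?w m \<ge> max (tl_alpha n i j ?w m) (tl_beta n i j ?w m)"
      unfolding e using st kq abs_iff by blast
  qed
  ultimately have "?w \<in> Qtn n q i j" unfolding Qtn_def by blast
  moreover have "pib n q i j ?w = x"
  proof
    fix t
    show "pib n q i j ?w t = x t"
    proof (cases "t < n * (q+1)")
      case True
      then have n0: "n > 0" by (cases n) auto
      have "t div n \<le> q" using True n0
        by (metis Suc_eq_plus1 less_Suc_eq_le less_mult_imp_div_less mult.commute)
      moreover have "t mod n < n" using n0 by simp
      ultimately show ?thesis using pib_val[of "t div n" q "t mod n" n] zp[of "t div n" "t mod n"]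
        by (metis div_mult_mod_eq)
    next
      case False
      then show ?thesis using xv by (simp add: pib_def vecs_def)
    qed
  qed
  ultimately show ?thesis by blast
qed

lemma part2:
  assumes ij: "\<forall>l<q. i l < j l \<and> j l < n" and w: "w \<in> Qtn n q i j"
  shows "pib n q i j w \<in> Qn n q i j \<and> pit n q i j (pib n q i j w) = w"
proof -
  have wv: "w \<in> vecs (n + 2*q)" and wq: "\<forall>l<n. tl_z n i j w q l = xid l"
    and cm: "\<forall>m\<in>{1..q}.
        tl_a n w m + tl_b n w m = tl_alpha n i j w m + tl_beta n i j w m \<and>
        tl_b n w m \<ge> max (tl_alpha n i j w m) (tl_beta n i j w m)"
    using w unfolding Qtn_def by auto
  let ?y = "pib n q i j w"
  have yv: "?y \<in> vecs (n * (q+1))" by (simp add: vecs_def pib_def)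
  have pv: "\<And>k l. k \<le> q \<Longrightarrow> l < n \<Longrightarrow> ?y (k * n + l) = tl_z n i j w k l" by (rule pib_val)
  have "?y \<in> Qn n q i j"
    unfolding Qn_def Let_def
  proof (intro CollectI conjI yv allI impI)
    fix l assume "l < n" then show "?y (q * n + l) = xid l" using pv wq by simp
  next
    fix k assume kq: "k < q"
    have ik: "i k < n" "j k < n" "i k \<noteq> j k" using ij kq by (auto dest: less_imp_neq)
    have c: "tl_a n w (Suc k) + tl_b n w (Suc k) = tl_alpha n i j w (Suc k) + tl_beta n i j w (Suc k) \<and>
        tl_b n w (Suc k) \<ge> max (tl_alpha n i j w (Suc k)) (tl_beta n i j w (Suc k))"
      using cm kq by auto
    have e: "?y (Suc k * n + i k) = tl_a n w (Suc k)" "?y (Suc k * n + j k) = tl_b n w (Suc k)"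
      "?y (k * n + i k) = tl_alpha n i j w (Suc k)" "?y (k * n + j k) = tl_beta n i j w (Suc k)"
      using pv ik kq by (auto simp: tl_alpha_def tl_beta_def simp del: mult_Suc)
    have H: "\<forall>l<n. l \<noteq> i k \<and> l \<noteq> j k \<longrightarrow> ?y (Suc k * n + l) = ?y (k * n + l)"
    proof (intro allI impI)
      fix l assume l: "l < n" "l \<noteq> i k \<and> l \<noteq> j k"
      have "?y (Suc k * n + l) = tl_z n i j w (Suc k) l" using pv[of "Suc k" l] kq l by linarith
      also have "\<dots> = tl_z n i j w k l" using l by simp
      also have "\<dots> = ?y (k * n + l)" using pv[of k l] kq l by simp
      finally show "?y (Suc k * n + l) = ?y (k * n + l)" .
    qed
    fix l assume "l < n" "l \<noteq> i k \<and> l \<noteq> j k"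
    then show "?y (Suc k * n + l) = ?y (k * n + l)" using H by blast
  next
    fix k assume kq: "k < q"
    have ik: "i k < n" "j k < n" "i k \<noteq> j k" using ij kq by (auto dest: less_imp_neq)
    have c: "tl_a n w (Suc k) + tl_b n w (Suc k) = tl_alpha n i j w (Suc k) + tl_beta n i j w (Suc k) \<and>
        tl_b n w (Suc k) \<ge> max (tl_alpha n i j w (Suc k)) (tl_beta n i j w (Suc k))"
      using cm kq by auto
    have e: "?y (Suc k * n + i k) = tl_a n w (Suc k)" "?y (Suc k * n + j k) = tl_b n w (Suc k)"
      "?y (k * n + i k) = tl_alpha n i j w (Suc k)" "?y (k * n + j k) = tl_beta n i j w (Suc k)"
      using pv ik kq by (auto simp: tl_alpha_def tl_beta_def simp del: mult_Suc)
    show "?y (Suc k * n + i k) + ?y (Suc k * n + j k) = ?y (k * n + i k) + ?y (k * n + j k)"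
      unfolding e using c by blast
    show "?y (Suc k * n + j k) - ?y (Suc k * n + i k) \<ge> \<bar>?y (k * n + j k) - ?y (k * n + i k)\<bar>"
      unfolding e using c abs_iff by blast
  qed
  moreover have "pit n q i j ?y = w"
  proof
    fix t
    show "pit n q i j ?y t = w t"
    proof (cases "t < n")
      case True
      then show ?thesis using pv[of 0 t] by (simp add: pit_def)
    next
      case F1: False
      show ?thesis
      proof (cases "t < n + 2*q")
        case True
        define k where "k = (t - n) div 2"
        have kq: "k < q" using True F1 unfolding k_def by auto
        have ik: "i k < n" "j k < n" "i k \<noteq> j k" using ij kq by (auto dest: less_imp_neq)
        show ?thesis
        proof (cases "even (t - n)")
          case True
          then have "t = n + 2 * k" using F1 unfolding k_def by auto
          then show ?thesis using pv[of "Suc k" "i k"] kq ik True F1 \<open>t < n + 2*q\<close>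
            by (simp add: pit_def k_def[symmetric] tl_a_def del: mult_Suc)
        next
          case False
          then have "t = n + 2 * k + 1" using F1 unfolding k_def by presburger
          then show ?thesis using pv[of "Suc k" "j k"] kq ik False F1 \<open>t < n + 2*q\<close>
            by (simp add: pit_def k_def[symmetric] tl_b_def del: mult_Suc)
        qed
      next
        case False
        then show ?thesis using wv F1 by (simp add: pit_def vecs_def)
      qed
    qed
  qed
  ultimately show ?thesis by blast
qed

theorem claim3:
  fixes n q :: nat and i j :: "nat \<Rightarrow> nat"
  assumes "\<forall>l<q. i l < j l \<and> j l < n"
    and "sorting_network n q i j"
  shows "\<exists>\<pi>t \<pi>b. affine_map (n * (q + 1)) (n + 2 * q) \<pi>t
                \<and> affine_map (n + 2 * q) (n * (q + 1)) \<pi>b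
                \<and> \<pi>b ` Qtn n q i j = Qn n q i j
                \<and> \<pi>t ` Qn n q i j = Qtn n q i j"
proof -
  have idx: "(m+1)*n + l < n*(q+1)" if "m < q" "l < n" for m l :: nat
  proof -
    have "(m+1)*n + l < (m+1)*n + n" using that by simp
    also have "\<dots> = (m+2)*n" by simp
    also have "\<dots> \<le> (q+1)*n" using that by (intro mult_right_mono) auto
    finally show ?thesis by (simp add: mult.commute)
  qed
  have A1: "affine_map (n * (q + 1)) (n + 2 * q) (pit n q i j)"
  proof (rule affine_map_intro[where g = "\<lambda>k x. if k < n then x k else
     (if even (k-n) then x (((k-n) div 2 + 1)*n + i ((k-n) div 2))
      else x (((k-n) div 2 + 1)*n + j ((k-n) div 2)))"])
    fix x :: "nat \<Rightarrow> real" and k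
    show "pit n q i j x k = (if k < n + 2 * q then (if k < n then x k else
     (if even (k-n) then x (((k-n) div 2 + 1)*n + i ((k-n) div 2))
      else x (((k-n) div 2 + 1)*n + j ((k-n) div 2)))) else 0)"
      by (simp add: pit_def)
  next
    fix k assume k: "k < n + 2 * q"
    show "aff (n * (q + 1)) (\<lambda>x. if k < n then x k else
     (if even (k-n) then x (((k-n) div 2 + 1)*n + i ((k-n) div 2))
      else x (((k-n) div 2 + 1)*n + j ((k-n) div 2))))"
    proof (cases "k < n")
      case True
      have "k < n * (q+1)" using True by (simp add: trans_less_add1)
      then show ?thesis using True by (simp add: aff_proj)
    next
      case False
      then have "(k-n) div 2 < q" using k by auto
      then show ?thesis using False assms(1) idx
        by (auto intro!: aff_if aff_proj)
    qed
  qed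
  have A2: "affine_map (n + 2 * q) (n * (q + 1)) (pib n q i j)"
  proof (rule affine_map_intro[where g = "\<lambda>k w. tl_z n i j w (k div n) (k mod n)"])
    fix x :: "nat \<Rightarrow> real" and k
    show "pib n q i j x k = (if k < n * (q + 1) then tl_z n i j x (k div n) (k mod n) else 0)"
      by (simp add: pib_def)
  next
    fix k assume k: "k < n * (q + 1)"
    then have n0: "n > 0" by (cases n) auto
    have "k div n \<le> q" using k n0
      by (metis Suc_eq_plus1 less_Suc_eq_le less_mult_imp_div_less mult.commute)
    then show "aff (n + 2 * q) (\<lambda>w. tl_z n i j w (k div n) (k mod n))"
      using aff_z assms(1) by blast
  qed
  have S1: "pib n q i j ` Qtn n q i j = Qn n q i j"
  proof
    show "pib n q i j ` Qtn n q i j \<subseteq> Qn n q i j" using part2[OF assms(1)] by blast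
    show "Qn n q i j \<subseteq> pib n q i j ` Qtn n q i j"
    proof
      fix x assume "x \<in> Qn n q i j"
      then show "x \<in> pib n q i j ` Qtn n q i j" using part1[OF assms(1)] by (metis image_eqI)
    qed
  qed
  have S2: "pit n q i j ` Qn n q i j = Qtn n q i j"
  proof
    show "pit n q i j ` Qn n q i j \<subseteq> Qtn n q i j" using part1[OF assms(1)] by blast
    show "Qtn n q i j \<subseteq> pit n q i j ` Qn n q i j"
    proof
      fix x assume "x \<in> Qtn n q i j"
      then show "x \<in> pit n q i j ` Qn n q i j" using part2[OF assms(1)] by (metis image_eqI)
    qed
  qed
  show ?thesis using A1 A2 S1 S2 by blast
qed

end
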